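(* For every $n\ge 3$, the cycle $C_n$ on $n$ vertices satisfies $$\mathrm{vol}(C_n)=1-\frac{2^{n-1}}{n!}.$$
   Context: For a finite simple undirected graph $G=(V,E)$ with $V=[n]$, and $S\subseteq[n-1]$, the cut vector $x^S\in\mathbb{R}^{|E|}$ has coordinates $x^S_{ij}=1$ if $|\{i,j\}\cap S|=1$ and $x^S_{ij}=0$ otherwise, for each edge $(i,j)\in E$. The cut polytope is $\mathrm{Cut}(G)=\mathrm{conv}\{x^S: S\subseteq[n-1]\}\subset\mathbb{R}^{|E|}$, and $\mathrm{vol}(G)$ denotes the $|E|$-dimensional Lebesgue volume of $\mathrm{Cut}(G)$. *)

theory Defs
  imports "HOL-Analysis.Analysis"
begin

text \<open>Graphs on vertex set [n] = {1..n}; an edge is a 2-element set of vertices.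
  Points of R^E are functions E -> real (extensional outside E), measured with the
  product Lebesgue measure PiM E (\<lambda>_. lborel), i.e. |E|-dimensional Lebesgue measure.\<close>

definition cut_vector :: "nat set \<Rightarrow> nat set \<Rightarrow> real" where
  "cut_vector S e = (if card (e \<inter> S) = 1 then 1 else 0)"

text \<open>Cut polytope: convex hull of the cut vectors x^S, S \<subseteq> [n-1], written out
  as the set of all convex combinations of this finite family.\<close>
definition cut_polytope :: "nat \<Rightarrow> nat set set \<Rightarrow> (nat set \<Rightarrow> real) set" where
  "cut_polytope n E =
     {x. \<exists>c :: nat set \<Rightarrow> real. (\<forall>S. 0 \<le> c S) \<and> (\<Sum>S\<in>Pow {1..n-1}. c S) = 1 \<and>
          x = (\<lambda>e\<in>E. \<Sum>S\<in>Pow {1..n-1}. c S * cut_vector S e)}"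

definition cut_volume :: "nat \<Rightarrow> nat set set \<Rightarrow> real" where
  "cut_volume n E = measure (PiM E (\<lambda>_. lborel)) (cut_polytope n E)"

definition cycle_edges :: "nat \<Rightarrow> nat set set" where
  "cycle_edges n = {{i, i + 1} | i. 1 \<le> i \<and> i < n} \<union> {{n, 1}}"

end

theory Submission
  imports Defs
begin


definition ind :: "'a set \<Rightarrow> 'a \<Rightarrow> real" where
  "ind F i = (if i \<in> F then 1 else 0)"

definition cube :: "'a set \<Rightarrow> ('a \<Rightarrow> real) \<Rightarrow> bool" where
  "cube I x \<longleftrightarrow> (\<forall>i\<in>I. 0 \<le> x i \<and> x i \<le> 1)"

definition dist1 :: "'a set \<Rightarrow> ('a \<Rightarrow> real) \<Rightarrow> 'a set \<Rightarrow> real" where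
  "dist1 I x F = (\<Sum>i\<in>I. \<bar>x i - ind F i\<bar>)"

definition Ev :: "'a set \<Rightarrow> 'a set set" where
  "Ev I = {F. F \<subseteq> I \<and> even (card F)}"

definition Od :: "'a set \<Rightarrow> 'a set set" where
  "Od I = {F. F \<subseteq> I \<and> odd (card F)}"

definition good :: "'a set \<Rightarrow> ('a \<Rightarrow> real) \<Rightarrow> bool" where
  "good I x \<longleftrightarrow> cube I x \<and> (\<forall>F\<in>Od I. 1 \<le> dist1 I x F)"

definition inhull :: "'a set \<Rightarrow> ('a \<Rightarrow> real) \<Rightarrow> bool" where
  "inhull I x \<longleftrightarrow> (\<exists>d. (\<forall>F. 0 \<le> d F) \<and> sum d (Ev I) = 1 \<and>
      (\<forall>i\<in>I. x i = (\<Sum>F\<in>Ev I. d F * ind F i)))"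

lemma finite_Ev[simp]: "finite I \<Longrightarrow> finite (Ev I)"
  unfolding Ev_def by (rule finite_subset[of _ "Pow I"]) auto

lemma finite_Od[simp]: "finite I \<Longrightarrow> finite (Od I)"
  unfolding Od_def by (rule finite_subset[of _ "Pow I"]) auto

lemma card_symdiff_ge1:
  assumes "finite I" "F \<subseteq> I" "G \<subseteq> I" "F \<noteq> G"
  shows "1 \<le> card ((F - G) \<union> (G - F))"
proof -
  have "(F - G) \<union> (G - F) \<noteq> {}" using assms(4) by blast
  moreover have "finite ((F - G) \<union> (G - F))" using assms(1-3) finite_subset by blast
  ultimately show ?thesis by (simp add: Suc_le_eq card_gt_0_iff)
qed

lemma card_symdiff_ge2:
  assumes "finite I" "F \<subseteq> I" "G \<subseteq> I" "F \<noteq> G" "even (card F) = even (card G)"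
  shows "2 \<le> card ((F - G) \<union> (G - F))"
proof (rule ccontr)
  assume "\<not> ?thesis"
  with card_symdiff_ge1[OF assms(1-4)] have c1: "card ((F - G) \<union> (G - F)) = 1" by linarith
  then obtain a where a: "(F - G) \<union> (G - F) = {a}" by (rule card_1_singletonE)
  have fF: "finite F" "finite G" using assms(1,2,3) finite_subset by auto
  show False
  proof (cases "a \<in> F")
    case True
    then have "a \<notin> G" using a by blast
    have "G = F - {a}"
    proof (intro set_eqI iffI)
      fix y assume "y \<in> G" then show "y \<in> F - {a}" using a \<open>a \<notin> G\<close> by (metis DiffI UnCI singletonD)
    next
      fix y assume "y \<in> F - {a}" then show "y \<in> G" using a by (metis Diff_iff UnCI singleton_iff)
    qed
    then have "card G = card F - 1" using True fF by simp
    moreover have "card F \<noteq> 0" using True fF by auto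
    ultimately show False using assms(5) by presburger
  next
    case False
    then have "a \<in> G" using a by blast
    have "F = G - {a}"
    proof (intro set_eqI iffI)
      fix y assume "y \<in> F" then show "y \<in> G - {a}" using a False by (metis DiffI UnCI singletonD)
    next
      fix y assume "y \<in> G - {a}" then show "y \<in> F" using a by (metis Diff_iff UnCI singleton_iff)
    qed
    then have "card F = card G - 1" using \<open>a \<in> G\<close> fF by simp
    moreover have "card G \<noteq> 0" using \<open>a \<in> G\<close> fF by auto
    ultimately show False using assms(5) by presburger
  qed
qed

lemma sum_abs_ind:
  assumes "finite I" "F \<subseteq> I" "G \<subseteq> I"
  shows "(\<Sum>i\<in>I. \<bar>ind G i - ind F i\<bar>) = real (card ((F - G) \<union> (G - F)))"
proof -
  have "(\<Sum>i\<in>I. \<bar>ind G i - ind F i\<bar>) = (\<Sum>i\<in>I. if i \<in> (F - G) \<union> (G - F) then 1 else 0)"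
    by (rule sum.cong) (auto simp: ind_def)
  also have "\<dots> = real (card (I \<inter> ((F - G) \<union> (G - F))))"
    using assms(1) by (simp add: sum.If_cases, intro arg_cong[where f=card]) auto
  also have "I \<inter> ((F - G) \<union> (G - F)) = (F - G) \<union> (G - F)" using assms by blast
  finally show ?thesis .
qed

lemma inhull_good:
  assumes fin: "finite I" and h: "inhull I x"
  shows "good I x"
proof -
  obtain d where d0: "\<And>F. 0 \<le> d F" and d1: "sum d (Ev I) = 1"
    and dx: "\<And>i. i \<in> I \<Longrightarrow> x i = (\<Sum>F\<in>Ev I. d F * ind F i)"
    using h unfolding inhull_def by blast
  have ind01: "0 \<le> ind F i" "ind F i \<le> 1" for F i by (auto simp: ind_def)
  have cube: "cube I x"
    unfolding cube_def
  proof
    fix i assume i: "i \<in> I"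
    have "0 \<le> (\<Sum>F\<in>Ev I. d F * ind F i)" by (intro sum_nonneg mult_nonneg_nonneg d0 ind01)
    moreover have "(\<Sum>F\<in>Ev I. d F * ind F i) \<le> (\<Sum>F\<in>Ev I. d F)"
      by (intro sum_mono) (simp add: d0 ind01 mult_left_le)
    ultimately show "0 \<le> x i \<and> x i \<le> 1" using dx[OF i] d1 by simp
  qed
  have "1 \<le> dist1 I x F" if F: "F \<in> Od I" for F
  proof -
    have "\<bar>x i - ind F i\<bar> = (\<Sum>G\<in>Ev I. d G * \<bar>ind G i - ind F i\<bar>)" if i: "i \<in> I" for i
    proof (cases "i \<in> F")
      case True
      have "\<bar>x i - ind F i\<bar> = 1 - x i" using cube i True by (auto simp: cube_def ind_def)
      also have "\<dots> = (\<Sum>G\<in>Ev I. d G) - (\<Sum>G\<in>Ev I. d G * ind G i)" using d1 dx[OF i] by simp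
      also have "\<dots> = (\<Sum>G\<in>Ev I. d G * \<bar>ind G i - ind F i\<bar>)"
        unfolding sum_subtractf[symmetric] using True by (intro sum.cong) (auto simp: ind_def)
      finally show ?thesis .
    next
      case False
      have "\<bar>x i - ind F i\<bar> = x i" using cube i False by (auto simp: cube_def ind_def)
      also have "\<dots> = (\<Sum>G\<in>Ev I. d G * \<bar>ind G i - ind F i\<bar>)"
        unfolding dx[OF i] using False by (intro sum.cong) (auto simp: ind_def)
      finally show ?thesis .
    qed
    then have "dist1 I x F = (\<Sum>i\<in>I. \<Sum>G\<in>Ev I. d G * \<bar>ind G i - ind F i\<bar>)"
      unfolding dist1_def by (intro sum.cong) auto
    also have "\<dots> = (\<Sum>G\<in>Ev I. d G * (\<Sum>i\<in>I. \<bar>ind G i - ind F i\<bar>))"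
      by (subst sum.swap) (simp add: sum_distrib_left)
    also have "\<dots> \<ge> (\<Sum>G\<in>Ev I. d G * 1)"
    proof (intro sum_mono mult_left_mono d0)
      fix G assume G: "G \<in> Ev I"
      have "F \<noteq> G" using F G by (auto simp: Ev_def Od_def)
      then show "1 \<le> (\<Sum>i\<in>I. \<bar>ind G i - ind F i\<bar>)"
        using F G fin card_symdiff_ge1[of I F G] by (subst sum_abs_ind) (auto simp: Ev_def Od_def)
    qed
    finally show ?thesis using d1 by simp
  qed
  with cube show ?thesis unfolding good_def by blast
qed


definition flip :: "'a set \<Rightarrow> 'a \<Rightarrow> 'a set" where
  "flip F j = (if j \<in> F then F - {j} else insert j F)"

lemma flip_Ev:
  assumes "finite I" "F \<in> Od I" "j \<in> I"
  shows "flip F j \<in> Ev I"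
proof -
  have fF: "finite F" "F \<subseteq> I" "odd (card F)" using assms finite_subset unfolding Od_def by auto
  show ?thesis
  proof (cases "j \<in> F")
    case True
    then have "card (F - {j}) = card F - 1" using fF by simp
    moreover have "card F \<noteq> 0" using True fF by auto
    ultimately show ?thesis using True fF unfolding flip_def Ev_def by auto
  next
    case False
    then show ?thesis using fF assms(3) unfolding flip_def Ev_def by auto
  qed
qed

lemma ind_flip: "ind (flip F j) i = (if j = i then 1 - ind F i else ind F i)"
  by (auto simp: ind_def flip_def)

lemma sum_pick:
  assumes "finite A" "finite J" "\<And>j. j \<in> J \<Longrightarrow> f j \<in> A"
  shows "(\<Sum>G\<in>A. (\<Sum>j\<in>J. if G = f j then c j else 0) * h G) = (\<Sum>j\<in>J. c j * (h (f j) :: real))"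
proof -
  have "(\<Sum>G\<in>A. (\<Sum>j\<in>J. if G = f j then c j else 0) * h G)
      = (\<Sum>G\<in>A. \<Sum>j\<in>J. if G = f j then c j * h G else 0)"
    unfolding sum_distrib_right by (intro sum.cong refl) simp
  also have "\<dots> = (\<Sum>j\<in>J. \<Sum>G\<in>A. if G = f j then c j * h G else 0)"
    by (rule sum.swap)
  also have "\<dots> = (\<Sum>j\<in>J. c j * h (f j))"
    using assms by (intro sum.cong refl) (simp add: sum.delta)
  finally show ?thesis .
qed

lemma face_inhull:
  assumes fin: "finite I" and cube: "cube I x" and F: "F \<in> Od I" and d1: "dist1 I x F = 1"
  shows "inhull I x"
proof -
  define lam where "lam j = \<bar>x j - ind F j\<bar>" for j
  define d where "d G = (\<Sum>j\<in>I. if G = flip F j then lam j else 0)" for G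
  have fl: "\<And>j. j \<in> I \<Longrightarrow> flip F j \<in> Ev I" using flip_Ev[OF fin F] by blast
  have "0 \<le> d G" for G unfolding d_def lam_def by (intro sum_nonneg) auto
  moreover have "sum d (Ev I) = 1"
  proof -
    have "sum d (Ev I) = (\<Sum>G\<in>Ev I. (\<Sum>j\<in>I. if G = flip F j then lam j else 0) * 1)"
      unfolding d_def by simp
    also have "\<dots> = (\<Sum>j\<in>I. lam j * 1)" by (rule sum_pick) (use fin fl in auto)
    finally show ?thesis using d1 unfolding dist1_def lam_def by simp
  qed
  moreover have "x i = (\<Sum>G\<in>Ev I. d G * ind G i)" if i: "i \<in> I" for i
  proof -
    have "(\<Sum>G\<in>Ev I. d G * ind G i) = (\<Sum>j\<in>I. lam j * ind (flip F j) i)"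
      unfolding d_def by (rule sum_pick) (use fin fl in auto)
    also have "\<dots> = (\<Sum>j\<in>I. lam j * ind F i + (if j = i then lam j * (1 - 2 * ind F i) else 0))"
      by (intro sum.cong refl) (auto simp: ind_flip algebra_simps)
    also have "\<dots> = (\<Sum>j\<in>I. lam j) * ind F i + lam i * (1 - 2 * ind F i)"
      using fin i by (simp add: sum.distrib sum_distrib_right sum.delta')
    also have "(\<Sum>j\<in>I. lam j) = 1" using d1 unfolding dist1_def lam_def by simp
    finally show ?thesis using cube i unfolding lam_def cube_def ind_def by auto
  qed
  ultimately show ?thesis unfolding inhull_def by blast
qed

lemma inhull_comb:
  assumes "inhull I y" "inhull I z" "0 \<le> t" "t \<le> 1"
    and "\<And>j. j \<in> I \<Longrightarrow> x j = t * y j + (1 - t) * z j"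
  shows "inhull I x"
proof -
  obtain d where d0: "\<And>F. 0 \<le> d F" and d1: "sum d (Ev I) = 1"
    and dx: "\<And>i. i \<in> I \<Longrightarrow> y i = (\<Sum>F\<in>Ev I. d F * ind F i)"
    using assms(1) unfolding inhull_def by blast
  obtain e where e0: "\<And>F. 0 \<le> e F" and e1: "sum e (Ev I) = 1"
    and ex: "\<And>i. i \<in> I \<Longrightarrow> z i = (\<Sum>F\<in>Ev I. e F * ind F i)"
    using assms(2) unfolding inhull_def by blast
  define c where "c F = t * d F + (1 - t) * e F" for F
  have "0 \<le> c F" for F unfolding c_def using assms(3,4) d0 e0 by simp
  moreover have "sum c (Ev I) = 1"
    unfolding c_def by (simp add: sum.distrib sum_distrib_left[symmetric] d1 e1)
  moreover have "x i = (\<Sum>F\<in>Ev I. c F * ind F i)" if "i \<in> I" for i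
  proof -
    have "(\<Sum>F\<in>Ev I. c F * ind F i) = (\<Sum>F\<in>Ev I. t * (d F * ind F i) + (1 - t) * (e F * ind F i))"
      unfolding c_def by (intro sum.cong refl) (simp add: algebra_simps)
    also have "\<dots> = t * y i + (1 - t) * z i"
      unfolding sum.distrib sum_distrib_left[symmetric] dx[OF that] ex[OF that] by simp
    finally show ?thesis using assms(5)[OF that] by simp
  qed
  ultimately show ?thesis unfolding inhull_def by blast
qed

lemma int_inhull:
  assumes fin: "finite I" and g: "good I x" and nf: "\<And>i. i \<in> I \<Longrightarrow> \<not> (0 < x i \<and> x i < 1)"
  shows "inhull I x"
proof -
  define F where "F = {i\<in>I. x i = 1}"
  have xi: "x i = ind F i" if "i \<in> I" for i
    using g nf[OF that] that unfolding good_def cube_def F_def ind_def by force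
  have "F \<in> Ev I"
  proof (rule ccontr)
    assume "F \<notin> Ev I"
    then have "F \<in> Od I" unfolding Ev_def Od_def F_def by auto
    moreover have "dist1 I x F = 0" unfolding dist1_def using xi by simp
    ultimately show False using g unfolding good_def by fastforce
  qed
  define d where "d G = (if G = F then 1 else (0::real))" for G
  have "\<forall>G. 0 \<le> d G" unfolding d_def by simp
  moreover have "sum d (Ev I) = 1" unfolding d_def using \<open>F \<in> Ev I\<close> fin by (simp add: sum.delta)
  moreover have "\<forall>i\<in>I. x i = (\<Sum>G\<in>Ev I. d G * ind G i)"
  proof
    fix i assume "i \<in> I"
    have "(\<Sum>G\<in>Ev I. d G * ind G i) = (\<Sum>G\<in>Ev I. if G = F then ind F i else 0)"
      unfolding d_def by (intro sum.cong refl) simp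
    also have "\<dots> = ind F i" using \<open>F \<in> Ev I\<close> fin by (simp add: sum.delta)
    finally show "x i = (\<Sum>G\<in>Ev I. d G * ind G i)" using xi[OF \<open>i \<in> I\<close>] by simp
  qed
  ultimately show ?thesis unfolding inhull_def by blast
qed

lemma dist1_upd:
  assumes "finite I" "i \<in> I"
  shows "dist1 I (x(i := v)) F = dist1 I x F - \<bar>x i - ind F i\<bar> + \<bar>v - ind F i\<bar>"
proof -
  have "dist1 I (x(i := v)) F = \<bar>v - ind F i\<bar> + (\<Sum>j\<in>I - {i}. \<bar>x j - ind F j\<bar>)"
    unfolding dist1_def using assms by (simp add: sum.remove)
  moreover have "dist1 I x F = \<bar>x i - ind F i\<bar> + (\<Sum>j\<in>I - {i}. \<bar>x j - ind F j\<bar>)"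
    unfolding dist1_def using assms by (simp add: sum.remove)
  ultimately show ?thesis by simp
qed

lemma good_inhull:
  assumes fin: "finite I"
  shows "good I x \<Longrightarrow> inhull I x"
proof (induction "card {i\<in>I. 0 < x i \<and> x i < 1}" arbitrary: x rule: less_induct)
  case less
  note g = less.prems
  show ?case
  proof (cases "\<exists>i\<in>I. 0 < x i \<and> x i < 1")
    case False
    then show ?thesis using int_inhull[OF fin g] by blast
  next
    case True
    then obtain i where i: "i \<in> I" "0 < x i" "x i < 1" by blast
    have gd: "1 \<le> dist1 I x F" if "F \<in> Od I" for F using g that unfolding good_def by blast
    have cx: "cube I x" using g unfolding good_def by blast
    define A where "A = {F \<in> Od I. i \<in> F}"
    define B where "B = {F \<in> Od I. i \<notin> F}"
    have fA: "finite A" "finite B" using fin unfolding A_def B_def by auto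
    define up where "up = Min (insert (1 - x i) ((\<lambda>F. dist1 I x F - 1) ` A))"
    define dn where "dn = Min (insert (x i) ((\<lambda>F. dist1 I x F - 1) ` B))"
    define y where "y = x(i := x i + up)"
    define z where "z = x(i := x i - dn)"
    have up_le: "up \<le> 1 - x i" "\<And>F. F \<in> A \<Longrightarrow> up \<le> dist1 I x F - 1"
      unfolding up_def using fA by (auto intro: Min_le)
    have dn_le: "dn \<le> x i" "\<And>F. F \<in> B \<Longrightarrow> dn \<le> dist1 I x F - 1"
      unfolding dn_def using fA by (auto intro: Min_le)
    have up_ge: "0 \<le> up" unfolding up_def using fA i gd
      by (subst Min_ge_iff) (auto simp: A_def)
    have dn_ge: "0 \<le> dn" unfolding dn_def using fA i gd
      by (subst Min_ge_iff) (auto simp: B_def)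
    have frac_less: "card {j\<in>I. 0 < w j \<and> w j < 1} < card {j\<in>I. 0 < x j \<and> x j < 1}"
      if "w = x(i := v)" "v = 0 \<or> v = 1" for w v
    proof (rule psubset_card_mono)
      show "finite {j\<in>I. 0 < x j \<and> x j < 1}" using fin by simp
      show "{j\<in>I. 0 < w j \<and> w j < 1} \<subset> {j\<in>I. 0 < x j \<and> x j < 1}"
        using that i by auto
    qed
    have y_in: "inhull I y"
    proof -
      have cy: "cube I y" using cx up_le up_ge i unfolding y_def cube_def by auto
      have dy: "dist1 I y F = dist1 I x F + (if i \<in> F then - up else up)" for F
        unfolding y_def using dist1_upd[OF fin i(1)] i up_le up_ge by (auto simp: ind_def)
      have gy: "good I y" unfolding good_def
      proof (intro conjI cy ballI)
        fix F assume F: "F \<in> Od I"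
        show "1 \<le> dist1 I y F"
        proof (cases "i \<in> F")
          case True
          then have "F \<in> A" using F unfolding A_def by blast
          then show ?thesis using up_le(2)[of F] dy[of F] True by simp
        next
          case False
          then show ?thesis using gd[OF F] dy[of F] up_ge by simp
        qed
      qed
      have "up \<in> insert (1 - x i) ((\<lambda>F. dist1 I x F - 1) ` A)"
        unfolding up_def using fA by (intro Min_in) auto
      then show ?thesis
      proof
        assume "up = 1 - x i"
        then have "y = x(i := 1)" unfolding y_def by simp
        then show ?thesis using less.hyps[OF frac_less gy] by blast
      next
        assume "up \<in> (\<lambda>F. dist1 I x F - 1) ` A"
        then obtain F where F: "F \<in> A" "up = dist1 I x F - 1" by blast
        then have "dist1 I y F = 1" using dy[of F] unfolding A_def by simp
        then show ?thesis using face_inhull[OF fin cy _ ] F(1) unfolding A_def by blast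
      qed
    qed
    have z_in: "inhull I z"
    proof -
      have cz: "cube I z" using cx dn_le dn_ge i unfolding z_def cube_def by auto
      have dz: "dist1 I z F = dist1 I x F + (if i \<in> F then dn else - dn)" for F
        unfolding z_def using dist1_upd[OF fin i(1)] i dn_le dn_ge by (auto simp: ind_def)
      have gz: "good I z" unfolding good_def
      proof (intro conjI cz ballI)
        fix F assume F: "F \<in> Od I"
        show "1 \<le> dist1 I z F"
        proof (cases "i \<in> F")
          case False
          then have "F \<in> B" using F unfolding B_def by blast
          then show ?thesis using dn_le(2)[of F] dz[of F] False by simp
        next
          case True
          then show ?thesis using gd[OF F] dz[of F] dn_ge by simp
        qed
      qed
      have "dn \<in> insert (x i) ((\<lambda>F. dist1 I x F - 1) ` B)"
        unfolding dn_def using fA by (intro Min_in) auto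
      then show ?thesis
      proof
        assume "dn = x i"
        then have "z = x(i := 0)" unfolding z_def by simp
        then show ?thesis using less.hyps[OF frac_less gz] by blast
      next
        assume "dn \<in> (\<lambda>F. dist1 I x F - 1) ` B"
        then obtain F where F: "F \<in> B" "dn = dist1 I x F - 1" by blast
        then have "dist1 I z F = 1" using dz[of F] unfolding B_def by simp
        then show ?thesis using face_inhull[OF fin cz _ ] F(1) unfolding B_def by blast
      qed
    qed
    show ?thesis
    proof (cases "up = 0")
      case True
      then have "x = y" unfolding y_def by simp
      then show ?thesis using y_in by simp
    next
      case False
      then have upp: "0 < up" using up_ge by simp
      define t where "t = dn / (up + dn)"
      have t01: "0 \<le> t" "t \<le> 1" unfolding t_def using upp dn_ge by auto
      show ?thesis
      proof (rule inhull_comb[OF y_in z_in t01])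
        fix j assume "j \<in> I"
        show "x j = t * y j + (1 - t) * z j"
        proof (cases "j = i")
          case True
          have "t * (x i + up) + (1 - t) * (x i - dn) = x i + (t * up - (1 - t) * dn)"
            by (simp add: algebra_simps)
          also have "t * up - (1 - t) * dn = 0"
            unfolding t_def using upp dn_ge by (simp add: field_simps)
          finally show ?thesis using True unfolding y_def z_def by simp
        next
          case False
          then show ?thesis unfolding y_def z_def by (simp add: algebra_simps)
        qed
      qed
    qed
  qed
qed



abbreviation LM :: "'a set \<Rightarrow> ('a \<Rightarrow> real) measure" where "LM I \<equiv> PiM I (\<lambda>_. lborel)"

definition rfl :: "'a set \<Rightarrow> 'a set \<Rightarrow> ('a \<Rightarrow> real) \<Rightarrow> ('a \<Rightarrow> real)" where
  "rfl I F x = (\<lambda>i\<in>I. if i \<in> F then 1 - x i else x i)"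

lemma lborel_flip:
  assumes "A \<in> sets borel"
  shows "emeasure lborel ((\<lambda>t::real. 1 - t) -` A) = emeasure lborel A"
proof -
  have "lborel = density (distr lborel borel (\<lambda>x::real. 1 + (-1) * x)) (\<lambda>_. ennreal \<bar>-1\<bar>)"
    by (rule lborel_real_affine) simp
  then have eq: "distr lborel borel (\<lambda>x::real. 1 - x) = lborel" by (simp add: density_1)
  have "emeasure lborel A = emeasure (distr lborel borel (\<lambda>x::real. 1 - x)) A" using eq by simp
  also have "\<dots> = emeasure lborel ((\<lambda>t. 1 - t) -` A \<inter> space lborel)"
    by (rule emeasure_distr) (auto simp: assms)
  finally show ?thesis by simp
qed

lemma distr_rfl:
  assumes fin: "finite I"
  shows "distr (LM I) (LM I) (rfl I F) = LM I"
proof -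
  interpret product_sigma_finite "\<lambda>_::'a. lborel :: real measure" by standard
  have meas: "rfl I F \<in> measurable (LM I) (LM I)" unfolding rfl_def by measurable
  show ?thesis
  proof (rule PiM_eqI[OF fin])
    show "sets (distr (LM I) (LM I) (rfl I F)) = sets (LM I)" by simp
  next
    fix A :: "'a \<Rightarrow> real set" assume A: "\<And>i. i \<in> I \<Longrightarrow> A i \<in> sets lborel"
    define B where "B i = (if i \<in> F then (\<lambda>t::real. 1 - t) -` A i else A i)" for i
    have B: "B i \<in> sets lborel" if "i \<in> I" for i
    proof -
      have "(\<lambda>t::real. 1 - t) \<in> borel_measurable borel" by measurable
      then have "(\<lambda>t::real. 1 - t) -` A i \<inter> space borel \<in> sets borel"
        using A[OF that] by (intro measurable_sets) auto
      then show ?thesis using A[OF that] unfolding B_def by auto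
    qed
    have pre: "rfl I F -` PiE I A \<inter> space (LM I) = PiE I B"
      by (auto simp: rfl_def B_def space_PiM PiE_def extensional_def Pi_def split: if_splits)
    have "emeasure (distr (LM I) (LM I) (rfl I F)) (PiE I A) = emeasure (LM I) (rfl I F -` PiE I A \<inter> space (LM I))"
      by (rule emeasure_distr[OF meas]) (use A fin in \<open>auto intro!: sets_PiM_I_finite\<close>)
    also have "\<dots> = emeasure (LM I) (PiE I B)" by (simp add: pre)
    also have "\<dots> = (\<Prod>i\<in>I. emeasure lborel (B i))" by (rule emeasure_PiM[OF fin B])
    also have "\<dots> = (\<Prod>i\<in>I. emeasure lborel (A i))"
    proof (intro prod.cong refl)
      fix i assume i: "i \<in> I"
      have "A i \<in> sets borel" using A[OF i] by simp
      then show "emeasure lborel (B i) = emeasure lborel (A i)" by (simp add: B_def lborel_flip)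
    qed
    finally show "emeasure (distr (LM I) (LM I) (rfl I F)) (PiE I A) = (\<Prod>i\<in>I. emeasure lborel (A i))" .
  qed
qed

lemma simplex_closed:
  assumes "finite I" "0 \<le> t"
  shows "emeasure (LM I) {x\<in>space (LM I). (\<forall>i\<in>I. 0 \<le> x i) \<and> sum x I \<le> t} = ennreal (t ^ card I / fact (card I))"
proof -
  have "{x\<in>space (LM I). (\<forall>i\<in>I. 0 \<le> x i) \<and> sum x I \<le> t} = {x. (\<forall>i\<in>I. 0 \<le> x i) \<and> sum x I \<le> t} \<inter> space (LM I)"
    by auto
  then show ?thesis using emeasure_std_simplex_aux[OF assms]
    by (simp add: ennreal_fact[symmetric] divide_ennreal)
qed

lemma simplex_open:
  assumes fin: "finite I"
  shows "emeasure (LM I) {x\<in>space (LM I). (\<forall>i\<in>I. 0 \<le> x i) \<and> sum x I < 1} = ennreal (1 / fact (card I))"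
proof -
  define T where "T = {x\<in>space (LM I). (\<forall>i\<in>I. 0 \<le> x i) \<and> sum x I < 1}"
  define S where "S t = {x\<in>space (LM I). (\<forall>i\<in>I. 0 \<le> x i) \<and> sum x I \<le> t}" for t :: real
  define m where "m = card I"
  have Tm: "T \<in> sets (LM I)" unfolding T_def using fin by measurable
  have Sm: "S t \<in> sets (LM I)" for t unfolding S_def using fin by measurable
  have up: "emeasure (LM I) T \<le> ennreal (1 / fact m)"
  proof -
    have "emeasure (LM I) T \<le> emeasure (LM I) (S 1)"
      using Sm[of 1] by (intro emeasure_mono) (auto simp: T_def S_def)
    also have "\<dots> = ennreal (1 / fact m)" unfolding S_def m_def using simplex_closed[OF fin, of 1] by simp
    finally show ?thesis .
  qed
  then have fT: "emeasure (LM I) T \<noteq> \<infinity>" by (auto simp: top_unique)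
  define mu where "mu = measure (LM I) T"
  have emu: "emeasure (LM I) T = ennreal mu" unfolding mu_def using fT by (simp add: emeasure_eq_ennreal_measure)
  have mu_up: "mu \<le> 1 / fact m" using up emu by (simp add: ennreal_le_iff)
  have lo: "t ^ m / fact m \<le> mu" if "0 \<le> t" "t < 1" for t
  proof -
    have "ennreal (t ^ m / fact m) = emeasure (LM I) (S t)" unfolding S_def m_def using simplex_closed[OF fin that(1)] by simp
    also have "\<dots> \<le> emeasure (LM I) T"
      using Tm that by (intro emeasure_mono) (auto simp: T_def S_def)
    finally show ?thesis using emu mu_def by (simp add: ennreal_le_iff measure_nonneg)
  qed
  have lim: "((\<lambda>t::real. t ^ m / fact m) \<longlongrightarrow> 1 ^ m / fact m) (at_left 1)"
    using fact_gt_zero[where 'a=real, of m] by (intro tendsto_intros) auto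
  have "1 ^ m / fact m \<le> mu"
  proof (rule tendsto_le[OF _ tendsto_const lim])
    show "at_left (1::real) \<noteq> bot" by simp
    show "\<forall>\<^sub>F t in at_left 1. t ^ m / fact m \<le> mu"
      unfolding eventually_at_left_field using lo by (intro exI[of _ 0]) auto
  qed
  then have "mu = 1 / fact m" using mu_up by (simp only: power_one)
  then show ?thesis using emu unfolding T_def m_def by simp
qed


lemma flip_parity:
  assumes "finite I" "F \<subseteq> I" "j \<in> I"
  shows "flip F j \<subseteq> I" "even (card (flip F j)) \<longleftrightarrow> odd (card F)"
proof -
  have fF: "finite F" using assms finite_subset by auto
  show "flip F j \<subseteq> I" using assms unfolding flip_def by auto
  show "even (card (flip F j)) \<longleftrightarrow> odd (card F)"
  proof (cases "j \<in> F")
    case True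
    then have "card (F - {j}) = card F - 1" using fF by simp
    moreover have "card F \<noteq> 0" using True fF by auto
    ultimately show ?thesis using True unfolding flip_def by simp
  next
    case False
    then show ?thesis using fF unfolding flip_def by simp
  qed
qed

lemma flip_flip: "flip (flip F j) j = F"
  unfolding flip_def by auto

lemma card_Od:
  assumes fin: "finite I" and ne: "I \<noteq> {}"
  shows "card (Od I) = 2 ^ (card I - 1)"
proof -
  obtain a where a: "a \<in> I" using ne by blast
  have "bij_betw (\<lambda>G. flip G a) (Od I) (Ev I)"
  proof (rule bij_betw_byWitness[where f' = "\<lambda>G. flip G a"])
    show "\<forall>x\<in>Od I. flip (flip x a) a = x" "\<forall>x\<in>Ev I. flip (flip x a) a = x" by (simp_all add: flip_flip)
    show "(\<lambda>G. flip G a) ` Od I \<subseteq> Ev I" "(\<lambda>G. flip G a) ` Ev I \<subseteq> Od I"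
      using flip_parity[OF fin _ a] unfolding Od_def Ev_def by auto
  qed
  then have e: "card (Od I) = card (Ev I)" by (rule bij_betw_same_card)
  have pw: "Pow I = Ev I \<union> Od I" and dj: "Ev I \<inter> Od I = {}" unfolding Ev_def Od_def by auto
  have "card (Ev I) + card (Od I) = card (Ev I \<union> Od I)"
    by (rule card_Un_disjoint[symmetric]) (use fin dj in auto)
  also have "Ev I \<union> Od I = Pow I" using pw by simp
  also have "card (Pow I) = 2 ^ card I" by (rule card_Pow[OF fin])
  finally have "card (Ev I) + card (Od I) = 2 ^ card I" .
  moreover have "card I \<noteq> 0" using fin ne by simp
  ultimately show ?thesis using e by (cases "card I") auto
qed

lemma pre_rfl:
  assumes fin: "finite I" and F: "F \<subseteq> I"
  shows "rfl I F -` {x\<in>space (LM I). cube I x \<and> dist1 I x F < 1} \<inter> space (LM I)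
    = {x\<in>space (LM I). (\<forall>i\<in>I. 0 \<le> x i) \<and> sum x I < 1}"
proof -
  have sp: "rfl I F x \<in> space (LM I)" for x by (simp add: rfl_def space_PiM)
  have d: "dist1 I (rfl I F x) F = (\<Sum>i\<in>I. \<bar>x i\<bar>)" for x
    unfolding dist1_def by (intro sum.cong refl) (auto simp: rfl_def ind_def)
  have c: "cube I (rfl I F x) \<longleftrightarrow> (\<forall>i\<in>I. 0 \<le> x i \<and> x i \<le> 1)" for x
    unfolding cube_def rfl_def by auto
  have "((\<forall>i\<in>I. 0 \<le> x i \<and> x i \<le> 1) \<and> (\<Sum>i\<in>I. \<bar>x i\<bar>) < 1) \<longleftrightarrow> ((\<forall>i\<in>I. 0 \<le> x i) \<and> sum x I < 1)" for x :: "'a \<Rightarrow> real"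
  proof
    assume h: "(\<forall>i\<in>I. 0 \<le> x i \<and> x i \<le> 1) \<and> (\<Sum>i\<in>I. \<bar>x i\<bar>) < 1"
    then have "(\<Sum>i\<in>I. \<bar>x i\<bar>) = sum x I" by (intro sum.cong refl) (auto simp: abs_of_nonneg)
    then show "(\<forall>i\<in>I. 0 \<le> x i) \<and> sum x I < 1" using h by auto
  next
    assume h: "(\<forall>i\<in>I. 0 \<le> x i) \<and> sum x I < 1"
    then have e: "(\<Sum>i\<in>I. \<bar>x i\<bar>) = sum x I" by (intro sum.cong refl) (auto simp: abs_of_nonneg)
    have "x i \<le> 1" if "i \<in> I" for i
    proof -
      have "x i \<le> sum x I" using h that fin by (intro member_le_sum) auto
      then show ?thesis using h by simp
    qed
    then show "(\<forall>i\<in>I. 0 \<le> x i \<and> x i \<le> 1) \<and> (\<Sum>i\<in>I. \<bar>x i\<bar>) < 1" using h e by auto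
  qed
  then show ?thesis using sp d c by auto
qed

theorem vol_good:
  assumes fin: "finite I" and ne: "I \<noteq> {}"
  shows "measure (LM I) {x\<in>space (LM I). good I x} = 1 - 2 ^ (card I - 1) / fact (card I)"
proof -
  define C where "C = {x\<in>space (LM I). cube I x}"
  define U where "U F = {x\<in>space (LM I). cube I x \<and> dist1 I x F < 1}" for F
  interpret product_sigma_finite "\<lambda>_::'a. lborel :: real measure" by standard
  have Cm: "C \<in> sets (LM I)" unfolding C_def cube_def using fin by measurable
  have Um: "U F \<in> sets (LM I)" for F unfolding U_def cube_def dist1_def ind_def using fin by measurable
  have eq: "{x\<in>space (LM I). good I x} = C - (\<Union>F\<in>Od I. U F)"
    unfolding C_def U_def good_def by (auto simp: not_less)
  have C_eq: "C = PiE I (\<lambda>_. {0..1})" unfolding C_def cube_def by (auto simp: space_PiM PiE_def)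
  have eC: "emeasure (LM I) C = 1" unfolding C_eq by (subst emeasure_PiM[OF fin]) auto
  have UF: "emeasure (LM I) (U F) = ennreal (1 / fact (card I))" if F: "F \<in> Od I" for F
  proof -
    have FI: "F \<subseteq> I" using F unfolding Od_def by auto
    have "emeasure (LM I) (U F) = emeasure (distr (LM I) (LM I) (rfl I F)) (U F)"
      by (simp add: distr_rfl[OF fin])
    also have "\<dots> = emeasure (LM I) (rfl I F -` U F \<inter> space (LM I))"
    proof (rule emeasure_distr[OF _ Um])
      show "rfl I F \<in> measurable (LM I) (LM I)" unfolding rfl_def using fin by measurable
    qed
    also have "\<dots> = ennreal (1 / fact (card I))"
      unfolding U_def pre_rfl[OF fin FI] by (rule simplex_open[OF fin])
    finally show ?thesis .
  qed
  have disj: "disjoint_family_on U (Od I)"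
    unfolding disjoint_family_on_def
  proof (intro ballI impI)
    fix F G assume F: "F \<in> Od I" and G: "G \<in> Od I" and ne: "F \<noteq> G"
    show "U F \<inter> U G = {}"
    proof (rule ccontr)
      assume "U F \<inter> U G \<noteq> {}"
      then obtain x where x1: "dist1 I x F < 1" and x2: "dist1 I x G < 1" unfolding U_def by auto
      have "2 \<le> card ((F - G) \<union> (G - F))"
        using card_symdiff_ge2[OF fin _ _ ne] F G unfolding Od_def by auto
      also have "real (card ((F - G) \<union> (G - F))) = (\<Sum>i\<in>I. \<bar>ind G i - ind F i\<bar>)"
        using sum_abs_ind[OF fin, of F G] F G unfolding Od_def by auto
      also have "\<dots> \<le> (\<Sum>i\<in>I. \<bar>x i - ind F i\<bar> + \<bar>x i - ind G i\<bar>)"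
        by (intro sum_mono) auto
      also have "\<dots> = dist1 I x F + dist1 I x G" unfolding dist1_def by (simp add: sum.distrib)
      finally show False using x1 x2 by simp
    qed
  qed
  have "measure (LM I) {x\<in>space (LM I). good I x} = measure (LM I) C - measure (LM I) (\<Union>F\<in>Od I. U F)"
    unfolding eq
  proof (rule measure_Diff)
    show "emeasure (LM I) C \<noteq> \<infinity>" using eC by simp
    show "C \<in> sets (LM I)" by (rule Cm)
    show "(\<Union>F\<in>Od I. U F) \<in> sets (LM I)" using fin Um by auto
    show "(\<Union>F\<in>Od I. U F) \<subseteq> C" unfolding U_def C_def by auto
  qed
  also have "measure (LM I) C = 1" using eC by (simp add: measure_def)
  also have "measure (LM I) (\<Union>F\<in>Od I. U F) = (\<Sum>F\<in>Od I. measure (LM I) (U F))"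
    by (rule measure_finite_Union) (use fin Um disj UF in auto)
  also have "\<dots> = (\<Sum>F\<in>Od I. 1 / fact (card I))"
    by (intro sum.cong refl) (simp add: measure_def UF)
  also have "\<dots> = 2 ^ (card I - 1) / fact (card I)"
    using card_Od[OF fin ne] by simp
  finally show ?thesis .
qed



definition ed :: "nat \<Rightarrow> nat \<Rightarrow> nat set" where
  "ed n i = (if i < n then {i, Suc i} else {n, 1})"

definition nx :: "nat \<Rightarrow> nat \<Rightarrow> nat" where
  "nx n i = (if i < n then Suc i else 1)"

definition cutset :: "nat set set \<Rightarrow> nat set \<Rightarrow> nat set set" where
  "cutset E S = {e\<in>E. card (e \<inter> S) = 1}"

lemma ed_nx: "i \<le> n \<Longrightarrow> ed n i = {i, nx n i}"
  unfolding ed_def nx_def by auto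

lemma nx_neq: "n \<ge> 2 \<Longrightarrow> i \<in> {1..n} \<Longrightarrow> nx n i \<noteq> i"
  unfolding nx_def by auto

lemma nx_in: "i \<in> {1..n} \<Longrightarrow> nx n i \<in> {1..n}"
  unfolding nx_def by auto

lemma cycle_edges_ed:
  assumes "n \<ge> 3"
  shows "cycle_edges n = ed n ` {1..n}"
proof
  show "cycle_edges n \<subseteq> ed n ` {1..n}"
  proof
    fix e assume "e \<in> cycle_edges n"
    then consider i where "1 \<le> i" "i < n" "e = {i, i + 1}" | "e = {n, 1}"
      unfolding cycle_edges_def by blast
    then show "e \<in> ed n ` {1..n}"
    proof cases
      case 1
      then have "e = ed n i" unfolding ed_def by simp
      then show ?thesis using 1 by auto
    next
      case 2
      then have "e = ed n n" unfolding ed_def by simp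
      then show ?thesis using assms by auto
    qed
  qed
next
  show "ed n ` {1..n} \<subseteq> cycle_edges n"
  proof
    fix e assume "e \<in> ed n ` {1..n}"
    then obtain i where i: "i \<in> {1..n}" "e = ed n i" by blast
    show "e \<in> cycle_edges n"
    proof (cases "i < n")
      case True
      then have "e = {i, i + 1}" using i unfolding ed_def by simp
      then show ?thesis using i True unfolding cycle_edges_def by auto
    next
      case False
      then have "e = {n, 1}" using i unfolding ed_def by simp
      then show ?thesis unfolding cycle_edges_def by auto
    qed
  qed
qed

lemma inj_ed:
  assumes "n \<ge> 3"
  shows "inj_on (ed n) {1..n}"
proof
  fix i j assume i: "i \<in> {1..n}" and j: "j \<in> {1..n}" and e: "ed n i = ed n j"
  show "i = j"
  proof (cases "i < n"; cases "j < n")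
    assume "i < n" "j < n"
    then show ?thesis using e unfolding ed_def by (auto simp: doubleton_eq_iff)
  next
    assume "i < n" "\<not> j < n"
    then have "{i, Suc i} = {n, 1}" using e unfolding ed_def by simp
    then show ?thesis using assms \<open>i < n\<close> by (auto simp: doubleton_eq_iff)
  next
    assume "\<not> i < n" "j < n"
    then have "{j, Suc j} = {n, 1}" using e unfolding ed_def by simp
    then show ?thesis using assms \<open>j < n\<close> by (auto simp: doubleton_eq_iff)
  next
    assume "\<not> i < n" "\<not> j < n"
    then show ?thesis using i j by simp
  qed
qed

lemma card_cycle_edges:
  assumes "n \<ge> 3"
  shows "card (cycle_edges n) = n" "finite (cycle_edges n)" "cycle_edges n \<noteq> {}"
proof -
  show "card (cycle_edges n) = n"
    unfolding cycle_edges_ed[OF assms] using card_image[OF inj_ed[OF assms]] by simp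
  show "finite (cycle_edges n)" unfolding cycle_edges_ed[OF assms] by simp
  show "cycle_edges n \<noteq> {}" unfolding cycle_edges_ed[OF assms] using assms by auto
qed

lemma card_pair_inter:
  assumes "a \<noteq> b"
  shows "card ({a, b} \<inter> S) = 1 \<longleftrightarrow> ((a \<in> S) \<noteq> (b \<in> S))"
  using assms by (cases "a \<in> S"; cases "b \<in> S") (auto simp: Int_insert_left)

lemma ed_cut:
  assumes "n \<ge> 3" "i \<in> {1..n}"
  shows "card (ed n i \<inter> S) = 1 \<longleftrightarrow> ((i \<in> S) \<noteq> (nx n i \<in> S))"
  using ed_nx[of i n] nx_neq[of n i] assms card_pair_inter[of i "nx n i" S] by auto

lemma int_card_filter:
  assumes "finite A"
  shows "int (card {i\<in>A. P i}) = (\<Sum>i\<in>A. if P i then 1 else 0)"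
  using assms by (simp add: sum.inter_filter[symmetric])

lemma cutset_even:
  assumes n: "n \<ge> 3"
  shows "even (card (cutset (cycle_edges n) S))"
proof -
  define A where "A = {1..n}"
  define P where "P i = ((i \<in> S) \<noteq> (nx n i \<in> S))" for i
  have "cutset (cycle_edges n) S = ed n ` {i\<in>A. P i}"
    unfolding cutset_def cycle_edges_ed[OF n] A_def P_def using ed_cut[OF n] by auto
  have inj': "inj_on (ed n) {i\<in>A. P i}"
    by (rule inj_on_subset[OF inj_ed[OF n]]) (auto simp: A_def)
  have c: "card (cutset (cycle_edges n) S) = card {i\<in>A. P i}"
    unfolding \<open>cutset (cycle_edges n) S = ed n ` {i\<in>A. P i}\<close> by (rule card_image[OF inj'])
  define b where "b i = (if i \<in> S then 1 else 0 :: int)" for i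
  have "int (card {i\<in>A. P i}) = (\<Sum>i\<in>A. if P i then 1 else 0)"
    unfolding A_def by (rule int_card_filter) simp
  also have "\<dots> = (\<Sum>i\<in>A. b i + b (nx n i) - 2 * (b i * b (nx n i)))"
    by (intro sum.cong refl) (auto simp: P_def b_def)
  also have "\<dots> = (\<Sum>i\<in>A. b i) + (\<Sum>i\<in>A. b (nx n i)) - 2 * (\<Sum>i\<in>A. b i * b (nx n i))"
    by (simp add: sum.distrib sum_subtractf sum_distrib_left)
  also have "(\<Sum>i\<in>A. b (nx n i)) = (\<Sum>i\<in>A. b i)"
  proof -
    have inj: "inj_on (nx n) A" unfolding A_def inj_on_def nx_def by (auto split: if_splits)
    have "nx n ` A = A" unfolding A_def
      by (rule endo_inj_surj) (use inj nx_in in \<open>auto simp: A_def\<close>)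
    then show ?thesis using sum.reindex[OF inj, of b] by simp
  qed
  finally have "int (card {i\<in>A. P i}) = 2 * ((\<Sum>i\<in>A. b i) - (\<Sum>i\<in>A. b i * b (nx n i)))"
    by simp
  then have "even (int (card {i\<in>A. P i}))" by simp
  then show ?thesis using c by simp
qed

lemma cutset_sub: "cutset E S \<subseteq> E"
  unfolding cutset_def by auto

lemma cutset_surj:
  assumes n: "n \<ge> 3" and F: "F \<subseteq> cycle_edges n" "even (card F)"
  shows "\<exists>S. S \<subseteq> {1..n-1} \<and> cutset (cycle_edges n) S = F"
proof -
  define q where "q k = odd (card {j \<in> insert n {1..<k}. ed n j \<in> F})" for k
  define S where "S = {k \<in> {1..n-1}. q k}"
  have qn: "\<not> q n"
  proof -
    have "insert n {1..<n} = {1..n}" using n by auto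
    then have "{j \<in> insert n {1..<n}. ed n j \<in> F} = {j\<in>{1..n}. ed n j \<in> F}" by simp
    moreover have "F = ed n ` {j\<in>{1..n}. ed n j \<in> F}"
      using F(1) unfolding cycle_edges_ed[OF n] by auto
    then have "card F = card {j\<in>{1..n}. ed n j \<in> F}"
      using card_image[OF inj_on_subset[OF inj_ed[OF n]]] by (metis (no_types, lifting) mem_Collect_eq subsetI)
    ultimately show ?thesis unfolding q_def using F(2) by simp
  qed
  have q1: "q 1 \<longleftrightarrow> ed n n \<in> F"
  proof -
    have "{j \<in> insert n {1..<1}. ed n j \<in> F} = (if ed n n \<in> F then {n} else {})" by auto
    then show ?thesis unfolding q_def by simp
  qed
  have qs: "q (Suc k) \<longleftrightarrow> (q k \<noteq> (ed n k \<in> F))" if k: "1 \<le> k" "k < n" for k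
  proof -
    have "insert n {1..<Suc k} = insert k (insert n {1..<k})" using k by auto
    then have e: "{j \<in> insert n {1..<Suc k}. ed n j \<in> F} =
        (if ed n k \<in> F then insert k {j \<in> insert n {1..<k}. ed n j \<in> F} else {j \<in> insert n {1..<k}. ed n j \<in> F})"
      by auto
    define Q where "Q = {j \<in> insert n {1..<k}. ed n j \<in> F}"
    have kQ: "k \<notin> Q" using k unfolding Q_def by auto
    have fQ: "finite Q" unfolding Q_def by simp
    have "q (Suc k) = odd (card (if ed n k \<in> F then insert k Q else Q))"
      unfolding q_def e Q_def by simp
    also have "\<dots> = (q k \<noteq> (ed n k \<in> F))"
      using kQ fQ unfolding q_def Q_def[symmetric] by auto
    finally show ?thesis .
  qed
  have Sq: "k \<in> S \<longleftrightarrow> q k" if "k \<in> {1..n}" for k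
    using that qn unfolding S_def by (cases "k = n") auto
  have "cutset (cycle_edges n) S = F"
  proof (intro set_eqI iffI)
    fix e assume e: "e \<in> cutset (cycle_edges n) S"
    then obtain i where i: "i \<in> {1..n}" "e = ed n i"
      unfolding cutset_def cycle_edges_ed[OF n] by auto
    have c: "(i \<in> S) \<noteq> (nx n i \<in> S)" using e i ed_cut[OF n i(1)] unfolding cutset_def by auto
    show "e \<in> F"
    proof (cases "i < n")
      case True
      then show ?thesis using c i qs[of i] Sq[of i] Sq[of "Suc i"] unfolding nx_def by auto
    next
      case False
      then have "i = n" using i by auto
      then show ?thesis using c i q1 qn Sq[of n] Sq[of 1] n unfolding nx_def by auto
    qed
  next
    fix e assume e: "e \<in> F"
    then obtain i where i: "i \<in> {1..n}" "e = ed n i"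
      using F(1) unfolding cycle_edges_ed[OF n] by auto
    have "(i \<in> S) \<noteq> (nx n i \<in> S)"
    proof (cases "i < n")
      case True
      then show ?thesis using e i qs[of i] Sq[of i] Sq[of "Suc i"] unfolding nx_def by auto
    next
      case False
      then have "i = n" using i by auto
      then show ?thesis using e i q1 qn Sq[of n] Sq[of 1] n unfolding nx_def by auto
    qed
    then show "e \<in> cutset (cycle_edges n) S"
      using ed_cut[OF n i(1)] i F(1) e unfolding cutset_def by auto
  qed
  moreover have "S \<subseteq> {1..n-1}" unfolding S_def by auto
  ultimately show ?thesis by blast
qed


lemma cut_vector_ind: "e \<in> E \<Longrightarrow> cut_vector S e = ind (cutset E S) e"
  unfolding cut_vector_def ind_def cutset_def by simp

lemma polytope_eq:
  assumes n: "n \<ge> 3"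
  shows "cut_polytope n (cycle_edges n) = {x\<in>space (LM (cycle_edges n)). good (cycle_edges n) x}"
proof -
  define E where "E = cycle_edges n"
  define P where "P = Pow {1..n-1}"
  have fE: "finite E" unfolding E_def using card_cycle_edges[OF n] by simp
  have fP: "finite P" unfolding P_def by simp
  have sp: "x \<in> space (LM E) \<longleftrightarrow> x \<in> extensional E" for x :: "nat set \<Rightarrow> real"
    by (simp add: space_PiM PiE_def)
  have cutEv: "cutset E S \<in> Ev E" for S
    using cutset_even[OF n, of S] cutset_sub[of E S] unfolding Ev_def E_def by simp
  have "x \<in> cut_polytope n E \<longleftrightarrow> x \<in> extensional E \<and> inhull E x" for x
  proof
    assume "x \<in> cut_polytope n E"
    then obtain c where c0: "\<forall>S. 0 \<le> c S" and c1: "sum c P = 1"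
      and xe: "x = (\<lambda>e\<in>E. \<Sum>S\<in>P. c S * cut_vector S e)"
      unfolding cut_polytope_def P_def by blast
    define d where "d F = sum c {S. S \<in> P \<and> cutset E S = F}" for F
    have "\<forall>F. 0 \<le> d F" unfolding d_def using c0 by (simp add: sum_nonneg)
    moreover have "sum d (Ev E) = 1"
      unfolding d_def using c1 by (subst sum.group) (use fP fE cutEv in auto)
    moreover have "\<forall>e\<in>E. x e = (\<Sum>F\<in>Ev E. d F * ind F e)"
    proof
      fix e assume e: "e \<in> E"
      have "x e = (\<Sum>S\<in>P. c S * ind (cutset E S) e)" using e xe by (simp add: cut_vector_ind)
      also have "\<dots> = (\<Sum>F\<in>Ev E. sum (\<lambda>S. c S * ind (cutset E S) e) {S. S \<in> P \<and> cutset E S = F})"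
        by (rule sum.group[symmetric]) (use fP fE cutEv in auto)
      also have "\<dots> = (\<Sum>F\<in>Ev E. d F * ind F e)"
        unfolding d_def sum_distrib_right by (intro sum.cong refl) auto
      finally show "x e = (\<Sum>F\<in>Ev E. d F * ind F e)" .
    qed
    ultimately show "x \<in> extensional E \<and> inhull E x" unfolding inhull_def using xe by auto
  next
    assume h: "x \<in> extensional E \<and> inhull E x"
    then obtain d where d0: "\<forall>F. 0 \<le> d F" and d1: "sum d (Ev E) = 1"
      and dx: "\<forall>e\<in>E. x e = (\<Sum>F\<in>Ev E. d F * ind F e)"
      unfolding inhull_def by blast
    define sec where "sec F = (SOME S. S \<subseteq> {1..n-1} \<and> cutset E S = F)" for F
    have sec: "sec F \<in> P \<and> cutset E (sec F) = F" if "F \<in> Ev E" for F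
    proof -
      have "\<exists>S. S \<subseteq> {1..n-1} \<and> cutset E S = F"
        using cutset_surj[OF n, of F] that unfolding Ev_def E_def by auto
      then have "sec F \<subseteq> {1..n-1} \<and> cutset E (sec F) = F" unfolding sec_def by (rule someI_ex)
      then show ?thesis by (simp add: P_def)
    qed
    define c where "c S = sum d {F. F \<in> Ev E \<and> sec F = S}" for S
    have "\<forall>S. 0 \<le> c S" unfolding c_def using d0 by (simp add: sum_nonneg)
    moreover have "sum c P = 1"
      unfolding c_def using d1 by (subst sum.group) (use fP fE sec in auto)
    moreover have "x = (\<lambda>e\<in>E. \<Sum>S\<in>P. c S * cut_vector S e)"
    proof (rule ext)
      fix e
      show "x e = (\<lambda>e\<in>E. \<Sum>S\<in>P. c S * cut_vector S e) e"
      proof (cases "e \<in> E")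
        case False
        then show ?thesis using h by (simp add: extensional_def)
      next
        case e: True
        have "(\<Sum>S\<in>P. c S * cut_vector S e) = (\<Sum>S\<in>P. sum (\<lambda>F. d F * ind (cutset E (sec F)) e) {F. F \<in> Ev E \<and> sec F = S})"
          unfolding c_def sum_distrib_right using e by (intro sum.cong refl) (auto simp: cut_vector_ind)
        also have "\<dots> = (\<Sum>F\<in>Ev E. d F * ind (cutset E (sec F)) e)"
          by (rule sum.group) (use fP fE sec in auto)
        also have "\<dots> = (\<Sum>F\<in>Ev E. d F * ind F e)"
          by (intro sum.cong refl) (simp add: sec)
        finally show ?thesis using e dx by simp
      qed
    qed
    ultimately show "x \<in> cut_polytope n E" unfolding cut_polytope_def P_def by blast
  qed
  then show ?thesis
    using inhull_good[OF fE] good_inhull[OF fE] sp unfolding E_def[symmetric] by blast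
qed

theorem proposition5:
  fixes n :: nat
  assumes "n \<ge> 3"
  shows "cut_volume n (cycle_edges n) = 1 - 2 ^ (n - 1) / fact n"
proof -
  have e: "cut_polytope n (cycle_edges n) = {x\<in>space (LM (cycle_edges n)). good (cycle_edges n) x}"
    by (rule polytope_eq[OF assms])
  have fin: "finite (cycle_edges n)" and ne: "cycle_edges n \<noteq> {}"
    by (rule card_cycle_edges[OF assms])+
  have c: "card (cycle_edges n) = n" by (rule card_cycle_edges(1)[OF assms])
  have v: "measure (LM (cycle_edges n)) {x\<in>space (LM (cycle_edges n)). good (cycle_edges n) x}
      = 1 - 2 ^ (card (cycle_edges n) - 1) / fact (card (cycle_edges n))"
    by (rule vol_good[OF fin ne])
  show ?thesis unfolding cut_volume_def e v c by (rule refl)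
qed

thm_deps proposition5

end
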